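(* For every integer $n\ge2$ and every integer $s\ge0$ with $2^s\le n$, the polynomial $1+x^{2^s}$ does not divide $\operatorname{num}_{\mathcal B}(n,x)$ in $\mathbb{Z}[x]$. Consequently, for every $n\ge1$, $\gcd(\operatorname{num}_{\mathcal B}(n,x),\operatorname{den}_{\mathcal B}(n,x))=1$.
   Context: A binary partition of $n$ is a partition of $n$ (finite nonincreasing sequence of positive integers summing to $n$) all of whose parts are powers of $2$ (including $1$); $\mathcal B(n)$ denotes the set of binary partitions of $n$, and $m_\lambda(i)$ the number of parts of $\lambda$ equal to $i$. For $\lambda\in\mathcal B(n)$ let $h_{\mathcal B,\lambda}(x)=\prod_{k\ge0}(1+x^{2^k})^{\lfloor n/2^k\rfloor-m_\lambda(2^k)}$. Let $G_{\mathcal B}(n,x)=\gcd\{h_{\mathcal B,\lambda}(x):\lambda\in\mathcal B(n)\}$ in $\mathbb{Z}[x]$ (normalized with positive leading coefficient), and $$\operatorname{num}_{\mathcal B}(n,x)=\frac{1}{G_{\mathcal B}(n,x)}\sum_{\lambda\in\mathcal B(n)}h_{\mathcal B,\lambda}(x),\qquad \operatorname{den}_{\mathcal B}(n,x)=\frac{\prod_{k\ge0}(1+x^{2^k})^{\lfloor n/2^k\rfloor}}{G_{\mathcal B}(n,x)}.$$ *)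

theory Defs
  imports "HOL-Library.Multiset" "HOL-Computational_Algebra.Polynomial_Factorial"
begin

text \<open>A binary partition of n: a multiset of positive integers, all powers of 2,
  summing to n (the order of parts is irrelevant, so a multiset represents a
  nonincreasing sequence faithfully).\<close>
definition binary_partitions :: "nat \<Rightarrow> nat multiset set" where
  "binary_partitions n = {P. (\<forall>p\<in>#P. \<exists>k. p = 2 ^ k) \<and> sum_mset P = n}"

text \<open>h_{B,lambda}(x) = prod_{k>=0} (1+x^(2^k))^(floor(n/2^k) - m_lambda(2^k)).
  Factors with k > n have exponent 0 (2^k > n), so the product is over k <= n.\<close>
definition hB :: "nat \<Rightarrow> nat multiset \<Rightarrow> int poly" where
  "hB n P = (\<Prod>k\<in>{..n}. (1 + [:0, 1:] ^ (2 ^ k)) ^ (n div 2 ^ k - count P (2 ^ k)))"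

text \<open>G_B(n,x): gcd in Z[x], normalized (positive leading coefficient).\<close>
definition GB :: "nat \<Rightarrow> int poly" where
  "GB n = Gcd (hB n ` binary_partitions n)"

definition numB :: "nat \<Rightarrow> int poly" where
  "numB n = (\<Sum>P\<in>binary_partitions n. hB n P) div GB n"

definition denB :: "nat \<Rightarrow> int poly" where
  "denB n = (\<Prod>k\<in>{..n}. (1 + [:0, 1:] ^ (2 ^ k)) ^ (n div 2 ^ k)) div GB n"

end

theory Submission
  imports Defs Complex_Main
begin


lemma bp_elem:
  assumes "P \<in> binary_partitions n" "p \<in># P"
  shows "\<exists>k\<le>n. p = 2 ^ k" "p \<le> n"
proof -
  obtain k where k: "p = 2 ^ k" using assms unfolding binary_partitions_def by auto
  obtain P' where "P = add_mset p P'" using assms(2) by (metis multi_member_split)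
  hence "p \<le> sum_mset P" by simp
  thus pn: "p \<le> n" using assms(1) unfolding binary_partitions_def by auto
  have "k \<le> n" using less_exp[of k] pn k by linarith
  thus "\<exists>k\<le>n. p = 2 ^ k" using k by blast
qed

lemma sum_count_pow:
  assumes "\<forall>p\<in>#P. \<exists>k\<le>n. p = 2 ^ k"
  shows "(\<Sum>k\<le>n. 2 ^ k * count P (2 ^ k)) = sum_mset (P :: nat multiset)"
  using assms
proof (induction P)
  case empty
  then show ?case by simp
next
  case (add x P)
  then obtain j where j: "j \<le> n" "x = 2 ^ j" by auto
  have "(\<Sum>k\<le>n. 2 ^ k * count (add_mset x P) (2 ^ k))
      = (\<Sum>k\<le>n. 2 ^ k * count P (2 ^ k) + (if k = j then 2 ^ j else 0))"
    by (intro sum.cong) (auto simp: j)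
  also have "\<dots> = (\<Sum>k\<le>n. 2 ^ k * count P (2 ^ k)) + 2 ^ j"
    using j by (simp add: sum.distrib)
  also have "\<dots> = sum_mset (add_mset x P)" using add j by simp
  finally show ?case .
qed

lemma bp_sum:
  assumes "P \<in> binary_partitions n"
  shows "(\<Sum>k\<le>n. 2 ^ k * count P (2 ^ k)) = n"
  using sum_count_pow[of P n] bp_elem[OF assms] assms
  unfolding binary_partitions_def by auto

lemma bp_count_le:
  assumes "P \<in> binary_partitions n" "k \<le> n"
  shows "count P (2 ^ k) \<le> n div 2 ^ k"
proof -
  have "2 ^ k * count P (2 ^ k) \<le> (\<Sum>k\<le>n. 2 ^ k * count P (2 ^ k))"
    by (rule member_le_sum) (use assms in auto)
  hence "count P (2 ^ k) * 2 ^ k \<le> n" using bp_sum[OF assms(1)] by (simp add: mult.commute)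
  thus ?thesis by (simp add: less_eq_div_iff_mult_less_eq)
qed

lemma bp_finite: "finite (binary_partitions n)"
proof -
  have "binary_partitions n \<subseteq> (\<Union>m\<le>n. multisets_of_size {..n} m)"
  proof
    fix P assume P: "P \<in> binary_partitions n"
    have "size P = (\<Sum>a\<in>#P. 1)" by (rule size_eq_sum_mset)
    also have "\<dots> \<le> (\<Sum>a\<in>#P. a)"
      by (rule sum_mset_mono) (use P in \<open>auto simp: binary_partitions_def\<close>)
    also have "\<dots> = n" using P by (simp add: binary_partitions_def)
    finally have "size P \<le> n" .
    moreover have "set_mset P \<subseteq> {..n}" using bp_elem(2)[OF P] by auto
    ultimately show "P \<in> (\<Union>m\<le>n. multisets_of_size {..n} m)"
      by (auto simp: multisets_of_size_def)
  qed
  thus ?thesis by (rule finite_subset) auto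
qed

definition P0 :: "nat \<Rightarrow> nat \<Rightarrow> nat multiset" where
  "P0 n s = replicate_mset (n div 2 ^ s) (2 ^ s) + replicate_mset (n mod 2 ^ s) 1"

lemma P0_bp: "P0 n s \<in> binary_partitions n"
  unfolding P0_def binary_partitions_def
  by (auto intro: exI[of _ 0] simp: mult.commute)

lemma P0_count: "count (P0 n s) (2 ^ s) = n div 2 ^ s"
  unfolding P0_def by (cases "s = 0") auto

lemma surv_count:
  assumes "P \<in> binary_partitions n" "2 ^ s \<le> n" "count P (2 ^ s) = n div 2 ^ s"
  shows "count P (2 ^ Suc s) = 0"
proof -
  have s: "s < n" "Suc s \<le> n"
    using assms(2) less_exp[of s] by linarith+
  have "(\<Sum>k\<in>{s, Suc s}. 2 ^ k * count P (2 ^ k)) \<le> (\<Sum>k\<le>n. 2 ^ k * count P (2 ^ k))"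
    by (rule sum_mono2) (use s in auto)
  hence le: "2 ^ s * (n div 2 ^ s) + 2 ^ Suc s * count P (2 ^ Suc s) \<le> n"
    using bp_sum[OF assms(1)] assms(3) by simp
  have "n = 2 ^ s * (n div 2 ^ s) + n mod 2 ^ s" by simp
  moreover have "n mod 2 ^ s < 2 ^ s" by simp
  ultimately have "2 ^ Suc s * count P (2 ^ Suc s) < 2 ^ s" using le by linarith
  thus ?thesis by (cases "count P (2 ^ Suc s)") auto
qed



abbreviation Phi :: "nat \<Rightarrow> int poly" where
  "Phi k \<equiv> 1 + [:0, 1:] ^ (2 ^ k)"

lemma eis_aux:
  fixes P Q :: "int poly"
  assumes dp: "degree P \<ge> 1" and dq: "degree Q \<ge> 1"
    and odd_lead: "odd (lead_coeff P * lead_coeff Q)"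
    and ev: "\<forall>i < degree P + degree Q. even (coeff (P * Q) i)"
    and p0: "even (coeff P 0)" and q0: "odd (coeff Q 0)"
  shows False
proof -
  have oddlp: "odd (coeff P (degree P))" using odd_lead by simp
  define i where "i = (LEAST i. odd (coeff P i))"
  have oi: "odd (coeff P i)" unfolding i_def by (rule LeastI[of _ "degree P"]) (rule oddlp)
  have ile: "i \<le> degree P" unfolding i_def by (rule Least_le) (rule oddlp)
  have lt: "\<And>j. j < i \<Longrightarrow> even (coeff P j)" unfolding i_def using not_less_Least by blast
  have ipos: "i > 0" using oi p0 by (cases i) auto
  have "coeff (P * Q) i = (\<Sum>j\<le>i. coeff P j * coeff Q (i - j))" by (rule coeff_mult)
  also have "\<dots> = (\<Sum>j<i. coeff P j * coeff Q (i - j)) + coeff P i * coeff Q 0"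
    by (simp add: lessThan_Suc_atMost[symmetric])
  finally have eq: "coeff (P * Q) i = (\<Sum>j<i. coeff P j * coeff Q (i - j)) + coeff P i * coeff Q 0" .
  have "even (\<Sum>j<i. coeff P j * coeff Q (i - j))"
    by (rule dvd_sum) (use lt in auto)
  moreover have "odd (coeff P i * coeff Q 0)" using oi q0 by simp
  ultimately have "odd (coeff (P * Q) i)" using eq by simp
  moreover have "i < degree P + degree Q" using ile dq by linarith
  ultimately show False using ev by blast
qed

lemma eis:
  fixes P Q :: "int poly"
  assumes dp: "degree P \<ge> 1" and dq: "degree Q \<ge> 1"
    and odd_lead: "odd (lead_coeff P * lead_coeff Q)"
    and ev: "\<forall>i < degree P + degree Q. even (coeff (P * Q) i)"
    and c0: "\<not> 4 dvd coeff (P * Q) 0"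
  shows False
proof -
  have "even (coeff (P * Q) 0)" using ev dp by auto
  hence e0: "even (coeff P 0 * coeff Q 0)" by (simp add: coeff_mult_0)
  have n4: "\<not> 4 dvd (coeff P 0 * coeff Q 0)" using c0 by (simp add: coeff_mult_0)
  show False
  proof (cases "even (coeff P 0)")
    case True
    have "odd (coeff Q 0)"
    proof
      assume "even (coeff Q 0)"
      with True have "4 dvd (coeff P 0 * coeff Q 0)"
        by (metis (no_types) evenE mult_dvd_mono numeral_Bit0 mult_2 dvd_def)
      with n4 show False by simp
    qed
    then show False using eis_aux[OF dp dq odd_lead ev True] by blast
  next
    case False
    hence q0: "even (coeff Q 0)" using e0 by simp
    have ev': "\<forall>i < degree Q + degree P. even (coeff (Q * P) i)" using ev by (simp add: mult.commute add.commute)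
    show False using eis_aux[OF dq dp _ ev' q0 False] odd_lead by (simp add: mult.commute)
  qed
qed

lemma sq_id: "((1 + y + 2 * g) ^ 2 :: 'a :: comm_ring_1) = 1 + (y ^ 2) + 2 * (y + 2 * ((1 + y) * g + g * g))"
  by (simp add: algebra_simps power2_eq_square)

lemma lin_pow_mod2: "\<exists>g. [:1, 1:] ^ (2 ^ k) = Phi k + 2 * (g :: int poly)"
proof (induction k)
  case 0
  then show ?case by (intro exI[of _ 0]) (simp add: one_pCons)
next
  case (Suc k)
  then obtain g where g: "[:1, 1:] ^ (2 ^ k) = Phi k + 2 * (g :: int poly)" by blast
  have "[:1, 1:] ^ (2 ^ Suc k) = ([:1, 1:] ^ (2 ^ k)) ^ 2"
    by (simp add: power_mult[symmetric] mult.commute)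
  also have "\<dots> = 1 + ([:0, 1:] ^ (2 ^ k)) ^ 2 + 2 * ([:0, 1:] ^ (2 ^ k) + 2 * (Phi k * g + g * g))"
    unfolding g by (rule sq_id)
  also have "([:0, 1:] ^ (2 ^ k)) ^ 2 = ([:0, 1:] :: int poly) ^ (2 ^ Suc k)"
    by (simp add: power_mult[symmetric] mult.commute)
  finally show ?case by blast
qed

lemma coeff_2mult: "coeff (2 * (g :: int poly)) i = 2 * coeff g i"
  by (simp add: numeral_mult_conv_smult)



lemma Xpow: "[:0, 1:] ^ n = (monom 1 n :: 'a :: comm_semiring_1 poly)"
  by (simp add: monom_altdef)

lemma Phi_monom: "Phi k = 1 + monom 1 (2 ^ k)"
  by (simp add: Xpow)

lemma degree_Phi: "degree (Phi k) = 2 ^ k"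
  unfolding Phi_monom by (subst degree_add_eq_right) (auto simp: degree_monom_eq)

lemma Phi_nz: "Phi k \<noteq> 0"
  using degree_Phi[of k] by (metis degree_0 power_not_zero zero_neq_numeral)

lemma coeff_Xpow: "coeff ([:0, 1:] ^ n :: 'a :: comm_semiring_1 poly) i = (if i = n then 1 else 0)"
  unfolding Xpow coeff_monom by simp

lemma coeff_Phi: "coeff (Phi k) i = (if i = 0 then 1 else 0) + (if i = 2 ^ k then 1 else 0)"
  unfolding coeff_add coeff_Xpow by (simp add: coeff_1)

lemma pcompose_Xpow: "pcompose ([:0, 1:] ^ m) r = (r :: 'a :: comm_ring_1 poly) ^ m"
  by (induction m) (simp_all add: pcompose_1 pcompose_mult pcompose_pCons)

lemma const_factor_unit:
  assumes "Phi k = p * q" "degree p = 0"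
  shows "is_unit p"
proof -
  obtain c where c: "p = [:c:]" using assms(2) by (metis degree_eq_zeroE)
  have "1 = coeff (Phi k) (2 ^ k)" by (simp only: coeff_Phi) simp
  also have "\<dots> = c * coeff q (2 ^ k)" using assms(1) c by simp
  finally have "c dvd 1" by (metis dvdI)
  thus ?thesis using c by (simp add: is_unit_const_poly_iff)
qed

lemma Phi_irred:
  assumes "Phi k = p * q"
  shows "is_unit p \<or> is_unit q"
proof (rule ccontr)
  assume nu: "\<not> (is_unit p \<or> is_unit q)"
  define N :: nat where "N = 2 ^ k"
  have N1: "N \<ge> 1" unfolding N_def by simp
  have dp: "degree p \<ge> 1" using nu const_factor_unit[OF assms] by (cases "degree p") auto
  have dq: "degree q \<ge> 1" using nu const_factor_unit[of k q p] assms by (cases "degree q") (auto simp: mult.commute)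
  have pq0: "p \<noteq> 0" "q \<noteq> 0" using assms Phi_nz[of k] by auto
  have dsum: "degree p + degree q = N" using degree_mult_eq[OF pq0] assms degree_Phi[of k] N_def by simp
  define r :: "int poly" where "r = [:1, 1:]"
  define P where "P = pcompose p r"
  define Q where "Q = pcompose q r"
  have dr: "degree r = 1" unfolding r_def by simp
  have dP: "degree P = degree p" unfolding P_def by (simp add: degree_pcompose dr)
  have dQ: "degree Q = degree q" unfolding Q_def by (simp add: degree_pcompose dr)
  have PQ: "P * Q = 1 + r ^ N"
    unfolding P_def Q_def pcompose_mult[symmetric] assms[symmetric] N_def
    by (simp add: pcompose_add pcompose_1 pcompose_Xpow)
  obtain g where g: "r ^ N = Phi k + 2 * g" unfolding r_def N_def using lin_pow_mod2 by blast
  have c0: "coeff (P * Q) 0 = 2"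
    unfolding PQ r_def using coeff_linear_poly_power[of 0 N "1::int" 1] by simp
  have cN: "coeff (P * Q) N = 1"
    unfolding PQ r_def using coeff_linear_poly_power[of N N "1::int" 1] N1 by (simp add: coeff_1)
  have ci: "even (coeff (P * Q) i)" if "i < N" for i
  proof -
    have "coeff (P * Q) i = coeff 1 i + (coeff 1 i + coeff ([:0,1:] ^ N) i) + 2 * coeff g i"
      unfolding PQ g coeff_add coeff_2mult by (simp add: N_def)
    also have "\<dots> = 2 * (if i = 0 then 1 else 0) + 2 * coeff g i"
      using that unfolding coeff_Xpow by (simp add: coeff_1)
    finally show ?thesis by simp
  qed
  show False
  proof (rule eis[of P Q])
    show "1 \<le> degree P" using dP dp by simp
    show "1 \<le> degree Q" using dQ dq by simp
    have "lead_coeff P * lead_coeff Q = 1"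
      using cN coeff_mult_degree_sum[of P Q] dP dQ dsum by simp
    thus "odd (lead_coeff P * lead_coeff Q)" by simp
    show "\<forall>i<degree P + degree Q. even (coeff (P * Q) i)" using ci dP dQ dsum by simp
    show "\<not> 4 dvd coeff (P * Q) 0" using c0 by simp
  qed
qed

lemma prime_dvd_Phi:
  assumes "prime p" "p dvd Phi k"
  shows "Phi k dvd p"
proof -
  obtain q where q: "Phi k = p * q" using assms(2) by (auto elim: dvdE)
  have "\<not> is_unit p" using assms(1) by (metis not_prime_unit)
  hence "is_unit q" using Phi_irred[OF q] by simp
  thus ?thesis using q by (simp add: dvd_mult_unit_iff)
qed



definition ev :: "complex \<Rightarrow> int poly \<Rightarrow> complex" where
  "ev z p = poly (map_poly of_int p) z"

lemma mp_add: "map_poly (of_int :: int \<Rightarrow> 'a :: comm_ring_1) (p + q) = map_poly of_int p + map_poly of_int q"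
  by (rule poly_eqI) (simp add: coeff_map_poly)

lemma mp_mult: "map_poly (of_int :: int \<Rightarrow> 'a :: comm_ring_1) (p * q) = map_poly of_int p * map_poly of_int q"
  by (rule poly_eqI) (simp add: coeff_map_poly coeff_mult)

lemma ev_add: "ev z (p + q) = ev z p + ev z q" by (simp add: ev_def mp_add)
lemma ev_mult: "ev z (p * q) = ev z p * ev z q" by (simp add: ev_def mp_mult)
lemma ev_1: "ev z 1 = 1" by (simp add: ev_def)
lemma ev_0: "ev z 0 = 0" by (simp add: ev_def)
lemma mp_X: "map_poly (of_int :: int \<Rightarrow> 'a :: comm_ring_1) [:0, 1:] = [:0, 1:]"
  by (rule poly_eqI) (simp add: coeff_map_poly coeff_pCons split: nat.split)
lemma ev_X: "ev z [:0, 1:] = z" by (simp add: ev_def mp_X)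
lemma ev_pow: "ev z (p ^ m) = ev z p ^ m"
  by (induction m) (simp_all add: ev_1 ev_mult)
lemma ev_prod: "ev z (prod f A) = (\<Prod>a\<in>A. ev z (f a))"
  by (induction A rule: infinite_finite_induct) (simp_all add: ev_1 ev_mult)
lemma ev_sum: "ev z (sum f A) = (\<Sum>a\<in>A. ev z (f a))"
  by (induction A rule: infinite_finite_induct) (simp_all add: ev_add ev_0)

lemma cis_id: "1 + cis (2 * a) = cis a * complex_of_real (2 * cos a)"
proof -
  have c: "cos (2 * a) = 2 * cos a ^ 2 - 1" by (rule cos_double_cos)
  have s: "sin (2 * a) = 2 * sin a * cos a" by (rule sin_double)
  show ?thesis unfolding complex_eq_iff using c s by (simp add: power2_eq_square algebra_simps)
qed

lemma prod_cis: "(\<Prod>i\<in>A. cis (f i)) = cis (\<Sum>i\<in>A. f i)"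
  by (induction A rule: infinite_finite_induct) (simp_all add: cis_mult)

context
  fixes s :: nat
begin

definition th :: real where "th = pi / 2 ^ Suc s"
definition zz :: complex where "zz = cis (2 * th)"
definition gg :: "nat \<Rightarrow> real" where "gg k = 2 * cos (2 ^ k * th)"

lemma ev_Phi: "ev zz (Phi k) = cis (2 ^ k * th) * complex_of_real (gg k)"
proof -
  have "ev zz (Phi k) = 1 + zz ^ (2 ^ k)" by (simp add: ev_add ev_1 ev_pow ev_X)
  also have "zz ^ (2 ^ k) = cis (2 * (2 ^ k * th))" unfolding zz_def DeMoivre by (simp add: algebra_simps)
  finally show ?thesis unfolding gg_def using cis_id by simp
qed

lemma gg_s: "gg s = 0"
proof -
  have e: "2 ^ s * th = pi / 2" unfolding th_def by (simp add: field_simps)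
  show ?thesis unfolding gg_def e by simp
qed

lemma gg_pos: "k < s \<Longrightarrow> gg k > 0"
proof -
  assume "k < s"
  hence "(2::real) ^ k < 2 ^ s" by simp
  hence "2 ^ k * th < 2 ^ s * th" unfolding th_def by (intro mult_strict_right_mono) auto
  also have "2 ^ s * th = pi / 2" unfolding th_def by (simp add: field_simps)
  finally have "2 ^ k * th < pi / 2" .
  moreover have "2 ^ k * th > 0" unfolding th_def by simp
  ultimately show ?thesis unfolding gg_def using cos_gt_zero_pi[of "2 ^ k * th"] by simp
qed

lemma gg_big: "k > s \<Longrightarrow> gg k = 2 * (-1) ^ (2 ^ (k - Suc s))"
proof -
  assume "k > s"
  hence k: "k = (k - Suc s) + Suc s" by simp
  have "2 ^ k * th = real (2 ^ (k - Suc s)) * pi"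
    unfolding th_def by (subst k) (simp add: power_add field_simps)
  thus ?thesis unfolding gg_def using cos_npi[of "2 ^ (k - Suc s)"] by simp
qed

lemma gg_s1: "gg (Suc s) = -2" using gg_big[of "Suc s"] by simp
lemma gg_ss: "k > Suc s \<Longrightarrow> gg k = 2" using gg_big[of k] by simp

end



definition CC :: "nat \<Rightarrow> nat" where "CC n = (\<Sum>k\<le>n. (n div 2 ^ k) * 2 ^ k)"
definition RR :: "nat \<Rightarrow> nat \<Rightarrow> nat multiset \<Rightarrow> real" where
  "RR s n P = (\<Prod>k\<le>n. gg s k ^ (n div 2 ^ k - count P (2 ^ k)))"

lemma expo_sum:
  assumes "P \<in> binary_partitions n"
  shows "(\<Sum>k\<le>n. (n div 2 ^ k - count P (2 ^ k)) * 2 ^ k) = CC n - n"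
proof -
  have "(\<Sum>k\<le>n. (n div 2 ^ k - count P (2 ^ k)) * 2 ^ k) + (\<Sum>k\<le>n. 2 ^ k * count P (2 ^ k))
      = (\<Sum>k\<le>n. (n div 2 ^ k - count P (2 ^ k)) * 2 ^ k + 2 ^ k * count P (2 ^ k))"
    by (simp add: sum.distrib)
  also have "\<dots> = CC n" unfolding CC_def
  proof (rule sum.cong)
    fix k assume "k \<in> {..n}"
    hence "count P (2 ^ k) \<le> n div 2 ^ k" using bp_count_le[OF assms] by simp
    thus "(n div 2 ^ k - count P (2 ^ k)) * 2 ^ k + 2 ^ k * count P (2 ^ k) = n div 2 ^ k * 2 ^ k"
      by (simp add: mult.commute add_mult_distrib2[symmetric])
  qed simp
  finally show ?thesis using bp_sum[OF assms] by simp
qed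

lemma ev_hB:
  assumes "P \<in> binary_partitions n"
  shows "ev (zz s) (hB n P) = cis (real (CC n - n) * th s) * complex_of_real (RR s n P)"
proof -
  let ?e = "\<lambda>k. n div 2 ^ k - count P (2 ^ k)"
  have "ev (zz s) (hB n P) = (\<Prod>k\<le>n. (cis (2 ^ k * th s) * complex_of_real (gg s k)) ^ ?e k)"
    unfolding hB_def ev_prod ev_pow ev_Phi ..
  also have "\<dots> = (\<Prod>k\<le>n. cis (real (?e k * 2 ^ k) * th s)) * complex_of_real (RR s n P)"
    unfolding RR_def power_mult_distrib prod.distrib DeMoivre of_real_prod of_real_power
    by (simp add: mult.assoc)
  also have "(\<Prod>k\<le>n. cis (real (?e k * 2 ^ k) * th s)) = cis ((\<Sum>k\<le>n. real (?e k * 2 ^ k)) * th s)"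
    by (simp add: prod_cis sum_distrib_right)
  also have "(\<Sum>k\<le>n. real (?e k * 2 ^ k)) = real (CC n - n)"
    unfolding of_nat_sum[symmetric] expo_sum[OF assms] ..
  finally show ?thesis .
qed

lemma RR_zero:
  assumes "P \<in> binary_partitions n" "2 ^ s \<le> n" "count P (2 ^ s) \<noteq> n div 2 ^ s"
  shows "RR s n P = 0"
proof -
  have sn: "s \<le> n" using assms(2) less_exp[of s] by linarith
  have "count P (2 ^ s) \<le> n div 2 ^ s" using bp_count_le[OF assms(1) sn] .
  hence "n div 2 ^ s - count P (2 ^ s) > 0" using assms(3) by simp
  hence "gg s s ^ (n div 2 ^ s - count P (2 ^ s)) = 0" by (simp add: gg_s)
  thus ?thesis unfolding RR_def using sn by (intro prod_zero) auto
qed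

lemma RR_pos:
  assumes "P \<in> binary_partitions n" "2 ^ s \<le> n" "count P (2 ^ s) = n div 2 ^ s"
  shows "(-1) ^ (n div 2 ^ Suc s) * RR s n P > 0"
proof -
  have sn: "Suc s \<le> n" using assms(2) less_exp[of s] by linarith
  have c1: "count P (2 ^ Suc s) = 0" by (rule surv_count[OF assms])
  have "RR s n P = gg s (Suc s) ^ (n div 2 ^ Suc s - count P (2 ^ Suc s))
        * (\<Prod>k\<in>{..n} - {Suc s}. gg s k ^ (n div 2 ^ k - count P (2 ^ k)))"
    unfolding RR_def using sn by (subst prod.remove[of _ "Suc s"]) auto
  also have "gg s (Suc s) ^ (n div 2 ^ Suc s - count P (2 ^ Suc s)) = (-2) ^ (n div 2 ^ Suc s)"
    using c1 gg_s1 by simp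
  finally have R: "RR s n P = (-2) ^ (n div 2 ^ Suc s) * (\<Prod>k\<in>{..n} - {Suc s}. gg s k ^ (n div 2 ^ k - count P (2 ^ k)))" .
  have pos: "(\<Prod>k\<in>{..n} - {Suc s}. gg s k ^ (n div 2 ^ k - count P (2 ^ k))) > 0"
  proof (rule prod_pos)
    fix k assume k: "k \<in> {..n} - {Suc s}"
    consider "k < s" | "k = s" | "k > Suc s" using k by fastforce
    thus "gg s k ^ (n div 2 ^ k - count P (2 ^ k)) > 0"
    proof cases
      case 1 thus ?thesis using gg_pos by simp
    next
      case 2 thus ?thesis using assms(3) by simp
    next
      case 3 thus ?thesis using gg_ss by simp
    qed
  qed
  have "(-1) ^ (n div 2 ^ Suc s) * RR s n P = 2 ^ (n div 2 ^ Suc s) * (\<Prod>k\<in>{..n} - {Suc s}. gg s k ^ (n div 2 ^ k - count P (2 ^ k)))"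
    unfolding R mult.assoc[symmetric] power_mult_distrib[symmetric] by simp
  thus ?thesis using pos by simp
qed

lemma part1:
  assumes "2 ^ s \<le> n"
  shows "\<not> Phi s dvd (\<Sum>P\<in>binary_partitions n. hB n P)"
proof
  assume "Phi s dvd (\<Sum>P\<in>binary_partitions n. hB n P)"
  then obtain Q where Q: "(\<Sum>P\<in>binary_partitions n. hB n P) = Phi s * Q" by (auto elim: dvdE)
  have "ev (zz s) (\<Sum>P\<in>binary_partitions n. hB n P) = 0"
    unfolding Q ev_mult ev_Phi gg_s by simp
  moreover have "ev (zz s) (\<Sum>P\<in>binary_partitions n. hB n P)
      = cis (real (CC n - n) * th s) * complex_of_real (\<Sum>P\<in>binary_partitions n. RR s n P)"
    unfolding ev_sum of_real_sum sum_distrib_left by (intro sum.cong) (auto simp: ev_hB)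
  ultimately have "complex_of_real (\<Sum>P\<in>binary_partitions n. RR s n P) = 0"
    by (simp add: cis_neq_zero del: of_real_sum)
  hence S: "(\<Sum>P\<in>binary_partitions n. RR s n P) = 0" by (simp only: of_real_eq_0_iff)
  let ?c = "(-1::real) ^ (n div 2 ^ Suc s)"
  have nn: "\<forall>P\<in>binary_partitions n. 0 \<le> ?c * RR s n P"
  proof
    fix P assume P: "P \<in> binary_partitions n"
    show "0 \<le> ?c * RR s n P"
    proof (cases "count P (2 ^ s) = n div 2 ^ s")
      case True thus ?thesis using RR_pos[OF P assms] by simp
    next
      case False thus ?thesis using RR_zero[OF P assms] by simp
    qed
  qed
  have "0 < ?c * RR s n (P0 n s)" using RR_pos[OF P0_bp assms P0_count] .
  also have "\<dots> \<le> (\<Sum>P\<in>binary_partitions n. ?c * RR s n P)"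
    by (rule member_le_sum) (use nn P0_bp bp_finite in auto)
  also have "\<dots> = ?c * (\<Sum>P\<in>binary_partitions n. RR s n P)" by (simp add: sum_distrib_left)
  finally show False using S by simp
qed

lemma hB_nz: "hB n P \<noteq> 0"
  unfolding hB_def using Phi_nz by (simp add: prod_zero_iff)

lemma hB_prime:
  assumes "prime p" "p dvd hB n P"
  shows "\<exists>k\<le>n. 0 < n div 2 ^ k - count P (2 ^ k) \<and> p dvd Phi k"
proof -
  obtain k where k: "k \<le> n" "p dvd Phi k ^ (n div 2 ^ k - count P (2 ^ k))"
    using assms unfolding hB_def by (auto simp: prime_dvd_prod_iff)
  show ?thesis
  proof (cases "n div 2 ^ k - count P (2 ^ k) = 0")
    case True
    hence "is_unit p" using k(2) by simp
    thus ?thesis using assms(1) not_prime_unit by blast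
  next
    case False
    thus ?thesis using k prime_dvd_power[OF assms(1) k(2)] by auto
  qed
qed

lemma Phi_dvd_eq:
  assumes "Phi j dvd Phi k" "Phi k dvd Phi j"
  shows "j = k"
proof -
  have "degree (Phi j) \<le> degree (Phi k)" by (rule dvd_imp_degree_le[OF assms(1) Phi_nz])
  moreover have "degree (Phi k) \<le> degree (Phi j)" by (rule dvd_imp_degree_le[OF assms(2) Phi_nz])
  ultimately have "(2::nat) ^ j = 2 ^ k" unfolding degree_Phi by simp
  thus ?thesis by simp
qed

lemma GB_1: "GB n = 1"
proof -
  let ?g = "GB n"
  have gd: "\<And>P. P \<in> binary_partitions n \<Longrightarrow> ?g dvd hB n P"
    unfolding GB_def by (rule Gcd_dvd) auto
  have "?g \<noteq> 0" using gd[OF P0_bp[of n 0]] hB_nz by auto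
  have "is_unit ?g"
  proof (rule ccontr)
    assume "\<not> is_unit ?g"
    then obtain p where p: "p dvd ?g" "prime p" using prime_divisor_exists \<open>?g \<noteq> 0\<close> by blast
    obtain j where j: "j \<le> n" "0 < n div 2 ^ j - count (P0 n 0) (2 ^ j)" "p dvd Phi j"
      using hB_prime[OF p(2) dvd_trans[OF p(1) gd[OF P0_bp[of n 0]]]] by blast
    have "j \<noteq> 0" using j(2) P0_count[of n 0] by (cases "j = 0") auto
    hence "count (P0 n 0) (2 ^ j) = 0" unfolding P0_def by simp
    hence "2 ^ j \<le> n" using j(2) by (simp add: div_greater_zero_iff)
    obtain k where k: "k \<le> n" "0 < n div 2 ^ k - count (P0 n j) (2 ^ k)" "p dvd Phi k"
      using hB_prime[OF p(2) dvd_trans[OF p(1) gd[OF P0_bp[of n j]]]] by blast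
    have "k \<noteq> j" using k(2) P0_count[of n j] by auto
    moreover have "Phi j dvd p" "Phi k dvd p" using prime_dvd_Phi p(2) j(3) k(3) by auto
    hence "Phi j dvd Phi k" "Phi k dvd Phi j" using j(3) k(3) dvd_trans by blast+
    ultimately show False using Phi_dvd_eq by blast
  qed
  hence "normalize ?g = 1" by (rule is_unit_normalize)
  thus ?thesis unfolding GB_def by simp
qed

lemma numB_eq: "numB n = (\<Sum>P\<in>binary_partitions n. hB n P)"
  unfolding numB_def GB_1 by simp

lemma denB_eq: "denB n = (\<Prod>k\<in>{..n}. (1 + [:0, 1:] ^ (2 ^ k)) ^ (n div 2 ^ k))"
  unfolding denB_def GB_1 by simp

theorem theorem2:
  shows "(\<forall>n s::nat. 2 \<le> n \<longrightarrow> 2 ^ s \<le> n \<longrightarrow>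
            \<not> (1 + [:0, 1:] ^ (2 ^ s)) dvd numB n)
       \<and> (\<forall>n::nat. 1 \<le> n \<longrightarrow> gcd (numB n) (denB n) = 1)"
proof (intro conjI allI impI)
  fix n s :: nat assume "2 \<le> n" "2 ^ s \<le> n"
  thus "\<not> (1 + [:0, 1:] ^ (2 ^ s)) dvd numB n" unfolding numB_eq using part1 by blast
next
  fix n :: nat assume "1 \<le> n"
  have "coprime (numB n) (denB n)" unfolding denB_eq
  proof (rule prod_coprime_right)
    fix k assume "k \<in> {..n}"
    show "coprime (numB n) (Phi k ^ (n div 2 ^ k))"
    proof (cases "n div 2 ^ k = 0")
      case True thus ?thesis by simp
    next
      case False
      hence kn: "2 ^ k \<le> n" by (simp add: div_greater_zero_iff)
      have "coprime (numB n) (Phi k)"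
      proof (rule coprimeI)
        fix c assume c1: "c dvd numB n" and c2: "c dvd Phi k"
        obtain d where d: "Phi k = c * d" using c2 by (auto elim: dvdE)
        show "is_unit c"
        proof (rule ccontr)
          assume "\<not> is_unit c"
          hence "is_unit d" using Phi_irred[OF d] by simp
          hence "Phi k dvd c" using d by (simp add: dvd_mult_unit_iff)
          hence "Phi k dvd numB n" using c1 dvd_trans by blast
          thus False using part1[OF kn] unfolding numB_eq by blast
        qed
      qed
      thus ?thesis by simp
    qed
  qed
  thus "gcd (numB n) (denB n) = 1" by (simp add: coprime_iff_gcd_eq_1)
qed

end
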